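(* Suppose problem (P0-group) has a unique solution $v^*\in\mathbb{R}^M$. Suppose further that $x^*:=\nu^{-1}(v^* )\neq 0$ and that $y_i=(x^* )^TQ_ix^*$ for $i=1,\dots,N$. Then the solution set of problem (P0) is exactly $\{x^*,-x^*\}$.
   Context: Real setting. Let $n,N\ge 1$ and $M=n(n+1)/2$. Components of vectors in $\mathbb{R}^M$ are indexed by unordered pairs: for $1\le i,j\le n$ the symmetric index $ij$ ($=ji$) is $\sum_{k=1}^{\min\{i,j\}-1}(n-k+1)+|j-i|+1$. This is a bijection from unordered pairs $\{i,j\}$ (with $i=j$ allowed) onto $\{1,\dots,M\}$. The real Veronese map $\nu:\mathbb{R}^n\to\mathbb{R}^M$ is defined by $(\nu(x))_{ij}=x_ix_j$. For $j=1,\dots,n$, $W_j$ is the $n\times M$ binary matrix with $(W_j)_{k,l}=1$ if $l$ is the index $jk$ and $0$ otherwise. Thus $W_jv=(v_{j1},\dots,v_{jn})^T$, and in particular $W_j\nu(x)=x_jx$. $\|x\|_0$ is the number of nonzero entries of $x$. For vectors $u_1,\dots,u_n$, $\|\{u_j\}_{j=1}^n\|_0$ is the number of indices $j$ with $u_j\neq 0$. Data: vectors $q_1,\dots,q_N\in\mathbb{R}^n$, matrices $Q_i=q_iq_i^T$, and numbers $y_1,\dots,y_N\in\mathbb{R}$. The matrix $A\in\mathbb{R}^{N\times M}$ has entries $A_{i,jj}=q_{ij}^2$ and $A_{i,jk}=2q_{ij}q_{ik}$ for $j<k$, where $q_{ij}$ is the $j$-th entry of $q_i$. With this, $(q_i^Tx)^2=(A\nu(x))_i$.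 Inverse map $\nu^{-1}:\mathbb{R}^M\to\mathbb{R}^n$. Let $i$ be the smallest $j\in\{1,\dots,n\}$ with $v_{jj}>0$; if no such $j$ exists, set $i=0$. If $i>0$ and $v_{ji}^2/v_{ii}=v_{jj}$ for all $j=1,\dots,n$, then $\nu^{-1}(v)=\frac{1}{\sqrt{v_{ii}}}(v_{1i},v_{2i},\dots,v_{ni})^T$. Otherwise $\nu^{-1}(v)=0$. (P0): $\min_{x\in\mathbb{R}^n}\|x\|_0$ subject to $y_i=(q_i^Tx)^2=x^TQ_ix$ for $i=1,\dots,N$. (P0-group): $\min_{v\in\mathbb{R}^M}\|\{W_jv\}_{j=1}^n\|_0$ subject to $Av=y$ and $v_{jj}\ge 0$ for $j=1,\dots,n$. *)

theory Defs
  imports Complex_Main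
begin

text \<open>Vectors in R^n are represented as functions nat \<Rightarrow> real with components
  indexed by 1..n and all other components equal to 0.\<close>

definition vecs :: "nat \<Rightarrow> (nat \<Rightarrow> real) set" where
  "vecs n = {x. \<forall>i. i \<notin> {1..n} \<longrightarrow> x i = 0}"

definition Mdim :: "nat \<Rightarrow> nat" where
  "Mdim n = n * (n + 1) div 2"

definition sidx :: "nat \<Rightarrow> nat \<Rightarrow> nat \<Rightarrow> nat" where
  "sidx n i j = (\<Sum>k = 1..<min i j. n - k + 1) + nat \<bar>int j - int i\<bar> + 1"

definition pair_of :: "nat \<Rightarrow> nat \<Rightarrow> nat \<times> nat" where
  "pair_of n l = (SOME p. 1 \<le> fst p \<and> fst p \<le> snd p \<and> snd p \<le> n \<and> sidx n (fst p) (snd p) = l)"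

definition veronese :: "nat \<Rightarrow> (nat \<Rightarrow> real) \<Rightarrow> (nat \<Rightarrow> real)" where
  "veronese n x = (\<lambda>l. if l \<in> {1..Mdim n}
      then x (fst (pair_of n l)) * x (snd (pair_of n l)) else 0)"

definition Wmat :: "nat \<Rightarrow> nat \<Rightarrow> nat \<Rightarrow> nat \<Rightarrow> real" where
  "Wmat n j k l = (if l = sidx n j k then 1 else 0)"

definition Wapply :: "nat \<Rightarrow> nat \<Rightarrow> (nat \<Rightarrow> real) \<Rightarrow> (nat \<Rightarrow> real)" where
  "Wapply n j v = (\<lambda>k. if k \<in> {1..n} then (\<Sum>l = 1..Mdim n. Wmat n j k l * v l) else 0)"

definition l0 :: "nat \<Rightarrow> (nat \<Rightarrow> real) \<Rightarrow> nat" where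
  "l0 n x = card {i \<in> {1..n}. x i \<noteq> 0}"

definition l0_group :: "nat \<Rightarrow> (nat \<Rightarrow> real) \<Rightarrow> nat" where
  "l0_group n v = card {j \<in> {1..n}. \<exists>k \<in> {1..n}. Wapply n j v k \<noteq> 0}"

text \<open>Matrix A; q i j is the j-th entry of q_i.\<close>
definition Amat :: "nat \<Rightarrow> (nat \<Rightarrow> nat \<Rightarrow> real) \<Rightarrow> nat \<Rightarrow> nat \<Rightarrow> real" where
  "Amat n q i l = (let j = fst (pair_of n l); k = snd (pair_of n l) in
      if j = k then (q i j)\<^sup>2 else 2 * q i j * q i k)"

definition Aapply :: "nat \<Rightarrow> (nat \<Rightarrow> nat \<Rightarrow> real) \<Rightarrow> (nat \<Rightarrow> real) \<Rightarrow> nat \<Rightarrow> real" where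
  "Aapply n q v i = (\<Sum>l = 1..Mdim n. Amat n q i l * v l)"

text \<open>Quadratic form x^T Q_i x with Q_i = q_i q_i^T.\<close>
definition quadQ :: "nat \<Rightarrow> (nat \<Rightarrow> nat \<Rightarrow> real) \<Rightarrow> nat \<Rightarrow> (nat \<Rightarrow> real) \<Rightarrow> real" where
  "quadQ n q i x = (\<Sum>j = 1..n. \<Sum>k = 1..n. x j * (q i j * q i k) * x k)"

definition veronese_inv :: "nat \<Rightarrow> (nat \<Rightarrow> real) \<Rightarrow> (nat \<Rightarrow> real)" where
  "veronese_inv n v =
     (let vc = (\<lambda>i j. v (sidx n i j)) in
      if (\<exists>j \<in> {1..n}. vc j j > 0) then
        (let i = (LEAST j. j \<in> {1..n} \<and> vc j j > 0) in
          if (\<forall>j \<in> {1..n}. (vc j i)\<^sup>2 / vc i i = vc j j)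
          then (\<lambda>j. if j \<in> {1..n} then vc j i / sqrt (vc i i) else 0)
          else (\<lambda>_. 0))
      else (\<lambda>_. 0))"

definition feasible_P0 :: "nat \<Rightarrow> nat \<Rightarrow> (nat \<Rightarrow> nat \<Rightarrow> real) \<Rightarrow> (nat \<Rightarrow> real) \<Rightarrow> (nat \<Rightarrow> real) \<Rightarrow> bool" where
  "feasible_P0 n N q y x \<longleftrightarrow> x \<in> vecs n \<and>
     (\<forall>i \<in> {1..N}. y i = (\<Sum>j = 1..n. q i j * x j)\<^sup>2 \<and> y i = quadQ n q i x)"

definition sol_P0 :: "nat \<Rightarrow> nat \<Rightarrow> (nat \<Rightarrow> nat \<Rightarrow> real) \<Rightarrow> (nat \<Rightarrow> real) \<Rightarrow> (nat \<Rightarrow> real) \<Rightarrow> bool" where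
  "sol_P0 n N q y x \<longleftrightarrow> feasible_P0 n N q y x \<and>
     (\<forall>z. feasible_P0 n N q y z \<longrightarrow> l0 n x \<le> l0 n z)"

definition feasible_P0g :: "nat \<Rightarrow> nat \<Rightarrow> (nat \<Rightarrow> nat \<Rightarrow> real) \<Rightarrow> (nat \<Rightarrow> real) \<Rightarrow> (nat \<Rightarrow> real) \<Rightarrow> bool" where
  "feasible_P0g n N q y v \<longleftrightarrow> v \<in> vecs (Mdim n) \<and>
     (\<forall>i \<in> {1..N}. Aapply n q v i = y i) \<and>
     (\<forall>j \<in> {1..n}. v (sidx n j j) \<ge> 0)"

definition sol_P0g :: "nat \<Rightarrow> nat \<Rightarrow> (nat \<Rightarrow> nat \<Rightarrow> real) \<Rightarrow> (nat \<Rightarrow> real) \<Rightarrow> (nat \<Rightarrow> real) \<Rightarrow> bool" where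
  "sol_P0g n N q y v \<longleftrightarrow> feasible_P0g n N q y v \<and>
     (\<forall>w. feasible_P0g n N q y w \<longrightarrow> l0_group n v \<le> l0_group n w)"

end

theory Submission
  imports Defs
begin

definition PP :: "nat \<Rightarrow> (nat \<times> nat) set" where
  "PP n = {(i,j). 1 \<le> i \<and> i \<le> j \<and> j \<le> n}"

definition SS :: "nat \<Rightarrow> nat \<Rightarrow> nat" where
  "SS n i = (\<Sum>k = 1..<i. n - k + 1)"

lemma sidx_sym: "sidx n i j = sidx n j i"
  unfolding sidx_def by (simp add: min.commute abs_minus_commute)

lemma sidx_le: "i \<le> j \<Longrightarrow> sidx n i j = SS n i + (j - i) + 1"
  unfolding sidx_def SS_def by (simp add: min_def nat_diff_distrib)

lemma SS_Suc: "1 \<le> i \<Longrightarrow> SS n (Suc i) = SS n i + (n - i + 1)"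
  unfolding SS_def by simp

lemma SS_mono: "i \<le> i' \<Longrightarrow> SS n i \<le> SS n i'"
  unfolding SS_def by (rule sum_mono2) auto

lemma SS_top: "2 * SS n (Suc n) = n * (n + 1)"
proof (induction n)
  case 0 then show ?case by (simp add: SS_def)
next
  case (Suc n)
  have "SS (Suc n) (Suc (Suc n)) = (\<Sum>k = 1..<Suc n. Suc n - k + 1) + 1"
    unfolding SS_def by simp
  also have "(\<Sum>k = 1..<Suc n. Suc n - k + 1) = (\<Sum>k = 1..<Suc n. (n - k + 1) + 1)"
    by (rule sum.cong) auto
  also have "\<dots> = (\<Sum>k = 1..<Suc n. n - k + 1) + (\<Sum>k = 1..<Suc n. 1)"
    by (rule sum.distrib)
  also have "\<dots> = SS n (Suc n) + n"
    unfolding SS_def by simp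
  finally show ?case using Suc by (simp add: algebra_simps)
qed

lemma SS_top': "SS n (Suc n) = Mdim n"
  using SS_top[of n] unfolding Mdim_def by simp

lemma sidx_range: "(i,j) \<in> PP n \<Longrightarrow> sidx n i j \<in> {1..Mdim n}"
proof -
  assume "(i,j) \<in> PP n"
  hence h: "1 \<le> i" "i \<le> j" "j \<le> n" by (auto simp: PP_def)
  have "sidx n i j \<le> SS n (Suc i)" using h by (simp add: sidx_le SS_Suc)
  also have "\<dots> \<le> SS n (Suc n)" using h by (intro SS_mono) simp
  finally show ?thesis using h by (simp add: sidx_le SS_top')
qed

lemma sidx_inj_aux: "(i,j) \<in> PP n \<Longrightarrow> (i',j') \<in> PP n \<Longrightarrow> i < i' \<Longrightarrow> sidx n i j < sidx n i' j'"
proof -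
  assume a: "(i,j) \<in> PP n" "(i',j') \<in> PP n" "i < i'"
  hence h: "1 \<le> i" "i \<le> j" "j \<le> n" "i' \<le> j'" by (auto simp: PP_def)
  have "sidx n i j \<le> SS n (Suc i)" using h by (simp add: sidx_le SS_Suc)
  also have "\<dots> \<le> SS n i'" using a by (intro SS_mono) simp
  also have "\<dots> < sidx n i' j'" using h by (simp add: sidx_le)
  finally show ?thesis .
qed

lemma sidx_inj: "inj_on (\<lambda>p. sidx n (fst p) (snd p)) (PP n)"
proof (rule inj_onI)
  fix p p' assume a: "p \<in> PP n" "p' \<in> PP n" "sidx n (fst p) (snd p) = sidx n (fst p') (snd p')"
  obtain i j i' j' where p: "p = (i,j)" "p' = (i',j')" by fastforce
  have "\<not> i < i'" using sidx_inj_aux[of i j n i' j'] a p by auto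
  moreover have "\<not> i' < i" using sidx_inj_aux[of i' j' n i j] a p by auto
  ultimately have "i = i'" by simp
  then show "p = p'" using a p by (auto simp: sidx_le PP_def)
qed

lemma PP_0: "PP 0 = {}" unfolding PP_def by auto

lemma PP_Suc: "PP (Suc n) = PP n \<union> (\<lambda>i. (i, Suc n)) ` {1..Suc n}"
  unfolding PP_def by auto

lemma PP_finite: "finite (PP n)"
  by (rule finite_subset[of _ "{1..n} \<times> {1..n}"]) (auto simp: PP_def)

lemma PP_card: "card (PP n) = Mdim n"
proof (induction n)
  case 0 then show ?case by (simp add: PP_0 Mdim_def)
next
  case (Suc n)
  have d: "PP n \<inter> (\<lambda>i. (i, Suc n)) ` {1..Suc n} = {}" by (auto simp: PP_def)
  have "card (PP (Suc n)) = card (PP n) + card ((\<lambda>i. (i, Suc n)) ` {1..Suc n})"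
    unfolding PP_Suc by (rule card_Un_disjoint) (use d PP_finite in auto)
  also have "card ((\<lambda>i. (i, Suc n)) ` {1..Suc n}) = Suc n"
    by (subst card_image) (auto simp: inj_on_def)
  finally show ?case using Suc unfolding Mdim_def by simp
qed

lemma sidx_bij: "bij_betw (\<lambda>p. sidx n (fst p) (snd p)) (PP n) {1..Mdim n}"
proof -
  have sub: "(\<lambda>p. sidx n (fst p) (snd p)) ` PP n \<subseteq> {1..Mdim n}"
    using sidx_range by auto
  have "card ((\<lambda>p. sidx n (fst p) (snd p)) ` PP n) = card {1..Mdim n}"
    using card_image[OF sidx_inj] PP_card by simp
  hence "(\<lambda>p. sidx n (fst p) (snd p)) ` PP n = {1..Mdim n}"
    using card_subset_eq[OF _ sub] by simp
  thus ?thesis using sidx_inj by (simp add: bij_betw_def)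
qed

lemma pair_of_sidx: "(i,j) \<in> PP n \<Longrightarrow> pair_of n (sidx n i j) = (i,j)"
proof -
  assume a: "(i,j) \<in> PP n"
  let ?P = "\<lambda>p. 1 \<le> fst p \<and> fst p \<le> snd p \<and> snd p \<le> n \<and> sidx n (fst p) (snd p) = sidx n i j"
  have "?P (i,j)" using a by (auto simp: PP_def)
  hence "?P (pair_of n (sidx n i j))" unfolding pair_of_def by (rule someI)
  hence "pair_of n (sidx n i j) \<in> PP n" and
     "sidx n (fst (pair_of n (sidx n i j))) (snd (pair_of n (sidx n i j))) = sidx n (fst (i,j)) (snd (i,j))"
    by (auto simp: PP_def case_prod_beta)
  thus ?thesis using sidx_inj[of n] a unfolding inj_on_def by blast
qed

lemma veronese_sidx: "j \<in> {1..n} \<Longrightarrow> k \<in> {1..n} \<Longrightarrow> veronese n x (sidx n j k) = x j * x k"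
proof -
  assume a: "j \<in> {1..n}" "k \<in> {1..n}"
  have m: "(min j k, max j k) \<in> PP n" using a by (auto simp: PP_def)
  have s: "sidx n j k = sidx n (min j k) (max j k)"
    by (cases "j \<le> k") (auto simp: min_def max_def sidx_sym)
  show ?thesis unfolding s veronese_def using sidx_range[OF m] pair_of_sidx[OF m]
    by (cases "j \<le> k") (auto simp: min_def max_def)
qed

lemma Wapply_eq: "k \<in> {1..n} \<Longrightarrow> j \<in> {1..n} \<Longrightarrow> Wapply n j v k = v (sidx n j k)"
proof -
  assume a: "k \<in> {1..n}" "j \<in> {1..n}"
  have m: "(min j k, max j k) \<in> PP n" using a by (auto simp: PP_def)
  have s: "sidx n j k = sidx n (min j k) (max j k)"
    by (cases "j \<le> k") (auto simp: min_def max_def sidx_sym)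
  have r: "sidx n j k \<in> {1..Mdim n}" using sidx_range[OF m] s by simp
  have "(\<Sum>l = 1..Mdim n. Wmat n j k l * v l) = (\<Sum>l = 1..Mdim n. if sidx n j k = l then v (sidx n j k) else 0)"
    by (rule sum.cong) (auto simp: Wmat_def)
  also have "\<dots> = v (sidx n j k)" using r by (simp add: sum.delta)
  finally show ?thesis using a by (simp add: Wapply_def)
qed

lemma sq_sum_PP: "(\<Sum>j = 1..n. (a::nat\<Rightarrow>real) j)^2 = (\<Sum>p\<in>PP n. if fst p = snd p then (a (fst p))^2 else 2 * a (fst p) * a (snd p))"
  (is "_ = sum ?g (PP n)")
proof (induction n)
  case 0 then show ?case by (simp add: PP_0)
next
  case (Suc n)
  have d: "PP n \<inter> (\<lambda>i. (i, Suc n)) ` {1..Suc n} = {}" by (auto simp: PP_def)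
  have "sum ?g (PP (Suc n)) = sum ?g (PP n) + sum ?g ((\<lambda>i. (i, Suc n)) ` {1..Suc n})"
    unfolding PP_Suc by (rule sum.union_disjoint) (use d PP_finite in auto)
  also have "sum ?g ((\<lambda>i. (i, Suc n)) ` {1..Suc n}) = (\<Sum>i=1..Suc n. ?g (i, Suc n))"
    by (subst sum.reindex) (auto simp: inj_on_def)
  also have "\<dots> = (\<Sum>i=1..n. 2 * a i * a (Suc n)) + (a (Suc n))^2"
    by (simp add: sum.cl_ivl_Suc)
  also have "(\<Sum>i=1..n. 2 * a i * a (Suc n)) = 2 * a (Suc n) * (\<Sum>i=1..n. a i)"
    by (simp add: sum_distrib_left sum_distrib_right algebra_simps)
  finally show ?case using Suc by (simp add: sum.cl_ivl_Suc power2_eq_square algebra_simps)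
qed

lemma Aapply_veronese: "Aapply n q (veronese n x) i = (\<Sum>j = 1..n. q i j * x j)^2"
proof -
  let ?G = "\<lambda>p. (if fst p = snd p then (q i (fst p))^2 else 2 * q i (fst p) * q i (snd p)) * (x (fst p) * x (snd p))"
  have "Aapply n q (veronese n x) i = (\<Sum>l = 1..Mdim n. ?G (pair_of n l))"
    unfolding Aapply_def by (rule sum.cong) (auto simp: Amat_def veronese_def Let_def)
  also have "\<dots> = (\<Sum>p\<in>PP n. ?G (pair_of n (sidx n (fst p) (snd p))))"
    using sum.reindex_bij_betw[OF sidx_bij[of n], of "\<lambda>l. ?G (pair_of n l)"] by simp
  also have "\<dots> = (\<Sum>p\<in>PP n. ?G p)"
    by (rule sum.cong) (auto simp: pair_of_sidx)
  also have "\<dots> = (\<Sum>p\<in>PP n. if fst p = snd p then (q i (fst p) * x (fst p))^2 else 2 * (q i (fst p) * x (fst p)) * (q i (snd p) * x (snd p)))"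
    by (rule sum.cong) (auto simp: power2_eq_square algebra_simps)
  also have "\<dots> = (\<Sum>j = 1..n. q i j * x j)^2"
    by (rule sq_sum_PP[symmetric])
  finally show ?thesis .
qed

lemma quadQ_eq: "quadQ n q i x = (\<Sum>j = 1..n. q i j * x j)^2"
  unfolding quadQ_def power2_eq_square sum_product by (simp add: algebra_simps)


lemma feas_nu:
  assumes "feasible_P0 n N q y x"
  shows "feasible_P0g n N q y (veronese n x) \<and> l0_group n (veronese n x) = l0 n x"
proof
  show "feasible_P0g n N q y (veronese n x)"
  proof -
    have "veronese n x \<in> vecs (Mdim n)" by (simp add: vecs_def veronese_def)
    moreover have "\<forall>i \<in> {1..N}. Aapply n q (veronese n x) i = y i"
      using assms unfolding feasible_P0_def by (simp add: Aapply_veronese)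
    moreover have "\<forall>j \<in> {1..n}. veronese n x (sidx n j j) \<ge> 0"
      by (simp add: veronese_sidx)
    ultimately show ?thesis unfolding feasible_P0g_def by blast
  qed
  have "{j \<in> {1..n}. \<exists>k \<in> {1..n}. Wapply n j (veronese n x) k \<noteq> 0} = {j \<in> {1..n}. x j \<noteq> 0}"
    by (auto simp: Wapply_eq veronese_sidx) (metis atLeastAtMost_iff)
  thus "l0_group n (veronese n x) = l0 n x" unfolding l0_group_def l0_def by simp
qed

lemma feas_P0_intro:
  "x \<in> vecs n \<Longrightarrow> (\<forall>i\<in>{1..N}. y i = (\<Sum>j = 1..n. q i j * x j)^2) \<Longrightarrow> feasible_P0 n N q y x"
  unfolding feasible_P0_def by (simp add: quadQ_eq)

theorem theorem1:
  fixes n N :: nat and q :: "nat \<Rightarrow> nat \<Rightarrow> real" and y vstar :: "nat \<Rightarrow> real"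
  assumes "n \<ge> 1" and "N \<ge> 1"
    and "\<forall>v. sol_P0g n N q y v \<longleftrightarrow> v = vstar"
    and "veronese_inv n vstar \<noteq> (\<lambda>_. 0)"
    and "\<forall>i \<in> {1..N}. y i = quadQ n q i (veronese_inv n vstar)"
  shows "{x. sol_P0 n N q y x} = {veronese_inv n vstar, - veronese_inv n vstar}"
proof -
  define xs where "xs = veronese_inv n vstar"
  have vsol: "sol_P0g n N q y vstar" using assms(3) by simp
  have minw: "\<And>w. feasible_P0g n N q y w \<Longrightarrow> l0_group n vstar \<le> l0_group n w"
    using vsol unfolding sol_P0g_def by blast
  obtain i0 where i0: "i0 \<in> {1..n}"
    and xsf: "xs = (\<lambda>j. if j \<in> {1..n} then vstar (sidx n j i0) / sqrt (vstar (sidx n i0 i0)) else 0)"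
  proof -
    let ?vc = "\<lambda>i j. vstar (sidx n i j)"
    have e: "\<exists>j \<in> {1..n}. ?vc j j > 0"
      using assms(4) unfolding veronese_inv_def by (auto simp: Let_def split: if_splits)
    define i where "i = (LEAST j. j \<in> {1..n} \<and> ?vc j j > 0)"
    have iin: "i \<in> {1..n}" using e LeastI_ex[of "\<lambda>j. j \<in> {1..n} \<and> ?vc j j > 0"] unfolding i_def by blast
    have vi: "veronese_inv n vstar = (if (\<forall>j \<in> {1..n}. (?vc j i)\<^sup>2 / ?vc i i = ?vc j j)
         then (\<lambda>j. if j \<in> {1..n} then ?vc j i / sqrt (?vc i i) else 0) else (\<lambda>_. 0))"
      unfolding veronese_inv_def Let_def i_def using e by simp
    have "xs = (\<lambda>j. if j \<in> {1..n} then ?vc j i / sqrt (?vc i i) else 0)"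
      using vi assms(4) unfolding xs_def by (auto split: if_splits)
    thus ?thesis using that iin by blast
  qed
  have xsv: "xs \<in> vecs n" using xsf by (simp add: vecs_def)
  have xsfeas: "feasible_P0 n N q y xs"
    using xsv assms(5) unfolding feasible_P0_def xs_def[symmetric] by (simp add: quadQ_eq)
  have nxsv: "- xs \<in> vecs n" using xsv by (simp add: vecs_def)
  have nsq: "(\<Sum>j = 1..n. q i j * (- xs) j)^2 = (\<Sum>j = 1..n. q i j * xs j)^2" for i
    by (simp add: sum_negf)
  have nxsfeas: "feasible_P0 n N q y (- xs)"
    using xsfeas nxsv unfolding feasible_P0_def quadQ_eq nsq by simp
  have l0neg: "l0 n (- xs) = l0 n xs" unfolding l0_def by simp
  have l0le: "l0 n xs \<le> l0_group n vstar"
  proof -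
    have "{i \<in> {1..n}. xs i \<noteq> 0} \<subseteq> {j \<in> {1..n}. \<exists>k \<in> {1..n}. Wapply n j vstar k \<noteq> 0}"
      using i0 by (auto simp: xsf Wapply_eq) (metis atLeastAtMost_iff)
    thus ?thesis unfolding l0_def l0_group_def by (intro card_mono) auto
  qed
  have lowb: "\<And>z. feasible_P0 n N q y z \<Longrightarrow> l0 n xs \<le> l0 n z"
    using feas_nu minw l0le by (metis le_trans)
  have xssol: "sol_P0 n N q y xs" using xsfeas lowb unfolding sol_P0_def by blast
  have nxssol: "sol_P0 n N q y (- xs)" using nxsfeas lowb l0neg unfolding sol_P0_def by simp
  have nuxs: "veronese n xs = vstar"
  proof -
    have "sol_P0g n N q y (veronese n xs)"
      unfolding sol_P0g_def using feas_nu[OF xsfeas] minw l0le by (metis le_trans)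
    thus ?thesis using assms(3) by blast
  qed
  have "x = xs \<or> x = - xs" if xsol: "sol_P0 n N q y x" for x
  proof -
    have xf: "feasible_P0 n N q y x" and xle: "l0 n x \<le> l0 n xs"
      using xsol xsfeas unfolding sol_P0_def by auto
    have "sol_P0g n N q y (veronese n x)"
      unfolding sol_P0g_def using feas_nu[OF xf] minw l0le xle by (metis le_trans)
    hence nu: "veronese n x = veronese n xs" using assms(3) nuxs by blast
    have pr: "x j * x k = xs j * xs k" if "j \<in> {1..n}" "k \<in> {1..n}" for j k
      using arg_cong[OF nu, of "\<lambda>f. f (sidx n j k)"] that by (simp add: veronese_sidx)
    have xv: "x \<in> vecs n" using xf unfolding feasible_P0_def by simp
    obtain k0 where k0: "xs k0 \<noteq> 0" using assms(4) unfolding xs_def[symmetric] by auto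
    have k0n: "k0 \<in> {1..n}" using k0 xsv unfolding vecs_def by blast
    have "(x k0)^2 = (xs k0)^2" using pr[OF k0n k0n] by (simp add: power2_eq_square)
    hence "x k0 = xs k0 \<or> x k0 = - xs k0" by (simp add: power2_eq_iff)
    thus ?thesis
    proof
      assume h: "x k0 = xs k0"
      have "x j = xs j" for j
      proof (cases "j \<in> {1..n}")
        case True
        have "x j * xs k0 = xs j * xs k0" using pr[OF True k0n] h by simp
        thus ?thesis using k0 by simp
      next
        case False thus ?thesis using xv xsv unfolding vecs_def by auto
      qed
      thus ?thesis by auto
    next
      assume h: "x k0 = - xs k0"
      have "x j = - xs j" for j
      proof (cases "j \<in> {1..n}")
        case True
        have "x j * xs k0 = (- xs j) * xs k0" using pr[OF True k0n] h by simp
        thus ?thesis using k0 mult_right_cancel by blast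
      next
        case False thus ?thesis using xv xsv unfolding vecs_def by auto
      qed
      thus ?thesis by auto
    qed
  qed
  thus ?thesis using xssol nxssol unfolding xs_def[symmetric] by auto
qed

end
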